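(* Let $m, n, k, l, t, r$ be positive integers satisfying $k\geq l \geq t+r$ and $\min\{m, n\}\geq k+l-t+2$. Let $T$ be a $(t+2r)$-element subset of $[\min\{m,n\}]$ and fix $j\in [\min\{m,n\}]\setminus T$. For any $A\in \binom{[n]\setminus (T\cup \{j\})}{k-r-t}$ and $B \in \binom{[m]\setminus (T\cup \{j\})}{l-r-t}$ with $|A\cap B|=w$, there exist $A_1, A_2, \ldots, A_{w+1} \in \binom{[n]\setminus (T\cup \{j\})}{k-r-t}$ and $B_1, B_2, \ldots, B_{w+1} \in \binom{[m]\setminus (T\cup \{j\})}{l-r-t}$ such that (1) $A_i \cap B_i=\emptyset$ for $i=1,\ldots, w+1$; (2) $A_{i+1} \cap B_i=\emptyset$ for $i=1,\ldots, w$; (3) $A_1=A$ and $B_{w+1}=B$.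
   Context: $[n]=\{1,\dots,n\}$ and $\binom{D}{k}$ denotes the family of all $k$-element subsets of a finite set $D$. *)

theory Defs
  imports Main
begin

definition ksubsets :: "'a set \<Rightarrow> nat \<Rightarrow> 'a set set" where
  "ksubsets D k = {S. S \<subseteq> D \<and> card S = k}"

end

theory Submission
  imports Defs
begin

lemma step_lemma:
  fixes C UA Um A B :: "nat set" and a b :: nat and x :: nat
  assumes fC: "finite C" and CUA: "C \<subseteq> UA" and CUm: "C \<subseteq> Um"
    and cC: "card C \<ge> a + b + 1"
    and AU: "A \<subseteq> UA" and cA: "card A = a" and fA: "finite A"
    and BU: "B \<subseteq> Um" and cB: "card B = b" and fB: "finite B"
    and x: "x \<in> A \<inter> B"
  shows "\<exists>B1 A2. B1 \<subseteq> Um \<and> card B1 = b \<and> A \<inter> B1 = {} \<and> A2 \<subseteq> UA \<and> card A2 = a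
     \<and> A2 \<inter> B1 = {} \<and> card (A2 \<inter> B) = card (A \<inter> B) - 1"
proof -
  have cAB: "card (A \<union> B) + card (A \<inter> B) = a + b"
    using card_Un_Int[OF fA fB] cA cB by simp
  have "A \<inter> B \<noteq> {}" using x by blast
  hence "card (A \<inter> B) \<ge> 1" using fA by (simp add: Suc_le_eq card_gt_0_iff)
  hence "card (A \<union> B) + 1 \<le> a + b" using cAB by linarith
  hence "card C - card (A \<union> B) \<ge> 2" using cC by linarith
  hence "card (C - (A \<union> B)) \<ge> 2"
    using diff_card_le_card_Diff[of "A \<union> B" C] fA fB by simp
  hence "C - (A \<union> B) \<noteq> {}" by (intro notI) simp
  then obtain y where y: "y \<in> C" "y \<notin> A" "y \<notin> B" by blast
  define A2 where "A2 = insert y (A - {x})"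
  have xA: "x \<in> A" using x by blast
  have a1: "a \<ge> 1" using xA fA cA by (metis One_nat_def Suc_leI card_gt_0_iff empty_iff)
  have cAx: "card (A - {x}) = a - 1" using xA fA cA by simp
  have cA2: "card A2 = a"
    unfolding A2_def using y fA cAx a1 by simp
  have A2U: "A2 \<subseteq> UA" unfolding A2_def using y CUA AU by auto
  have A2B: "A2 \<inter> B = (A \<inter> B) - {x}" unfolding A2_def using y by auto
  have cA2B: "card (A2 \<inter> B) = card (A \<inter> B) - 1"
    unfolding A2B using x fA by (simp add: card_Diff_singleton)
  have "card (C - insert y A) \<ge> card C - card (insert y A)"
    using diff_card_le_card_Diff[of "insert y A" C] fA by simp
  moreover have "card (insert y A) = a + 1" using y fA cA by simp
  ultimately have "card (C - insert y A) \<ge> b" using cC by linarith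
  then obtain B1 where B1: "B1 \<subseteq> C - insert y A" "card B1 = b"
    by (rule obtain_subset_with_card_n)
  show ?thesis
    apply (rule exI[of _ B1], rule exI[of _ A2])
    using B1 CUm A2U cA2 cA2B unfolding A2_def by auto
qed

lemma chain_lemma:
  fixes C UA Um B :: "nat set" and a b :: nat
  assumes fC: "finite C" and CUA: "C \<subseteq> UA" and CUm: "C \<subseteq> Um"
    and cC: "card C \<ge> a + b + 1" and fUA: "finite UA"
    and BU: "B \<subseteq> Um" and cB: "card B = b" and fB: "finite B"
  shows "\<forall>A. A \<subseteq> UA \<and> card A = a \<and> card (A \<inter> B) = w \<longrightarrow>
   (\<exists>As Bs :: nat \<Rightarrow> nat set.
    (\<forall>i\<in>{1..w+1}. As i \<in> ksubsets UA a \<and> Bs i \<in> ksubsets Um b) \<and>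
    (\<forall>i\<in>{1..w+1}. As i \<inter> Bs i = {}) \<and>
    (\<forall>i\<in>{1..w}. As (i + 1) \<inter> Bs i = {}) \<and>
    As 1 = A \<and> Bs (w + 1) = B)"
proof (induction w)
  case 0
  show ?case
  proof (intro allI impI)
    fix A assume h: "A \<subseteq> UA \<and> card A = a \<and> card (A \<inter> B) = 0"
    have fA: "finite A" using h fUA finite_subset by blast
    have "A \<inter> B = {}" using h fA by simp
    thus "\<exists>As Bs :: nat \<Rightarrow> nat set.
    (\<forall>i\<in>{1..0+1}. As i \<in> ksubsets UA a \<and> Bs i \<in> ksubsets Um b) \<and>
    (\<forall>i\<in>{1..0+1}. As i \<inter> Bs i = {}) \<and>
    (\<forall>i\<in>{1..0}. As (i + 1) \<inter> Bs i = {}) \<and>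
    As 1 = A \<and> Bs (0 + 1) = B"
      apply (rule_tac x="\<lambda>_. A" in exI, rule_tac x="\<lambda>_. B" in exI)
      using h BU cB by (simp add: ksubsets_def)
  qed
next
  case (Suc w)
  show ?case
  proof (intro allI impI)
    fix A assume h: "A \<subseteq> UA \<and> card A = a \<and> card (A \<inter> B) = Suc w"
    have fA: "finite A" using h fUA finite_subset by blast
    have "A \<inter> B \<noteq> {}" using h by auto
    then obtain x where x: "x \<in> A \<inter> B" by blast
    obtain B1 A2 where S: "B1 \<subseteq> Um" "card B1 = b" "A \<inter> B1 = {}" "A2 \<subseteq> UA" "card A2 = a"
      "A2 \<inter> B1 = {}" "card (A2 \<inter> B) = card (A \<inter> B) - 1"
      using step_lemma[OF fC CUA CUm cC _ _ fA BU cB fB x] h by blast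
    have cw: "card (A2 \<inter> B) = w" using S h by simp
    obtain As Bs where IH:
      "\<forall>i\<in>{1..w+1}. As i \<in> ksubsets UA a \<and> Bs i \<in> ksubsets Um b"
      "\<forall>i\<in>{1..w+1}. As i \<inter> Bs i = {}"
      "\<forall>i\<in>{1..w}. As (i + 1) \<inter> Bs i = {}"
      "As 1 = A2" "Bs (w + 1) = B"
      using Suc.IH[rule_format, OF conjI[OF S(4) conjI[OF S(5) cw]]] by blast
    define As' where "As' = (\<lambda>i. if i = 1 then A else As (i - 1))"
    define Bs' where "Bs' = (\<lambda>i. if i = 1 then B1 else Bs (i - 1))"
    have c1: "\<forall>i\<in>{1..Suc w+1}. As' i \<in> ksubsets UA a \<and> Bs' i \<in> ksubsets Um b"
    proof
      fix i assume i: "i \<in> {1..Suc w + 1}"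
      show "As' i \<in> ksubsets UA a \<and> Bs' i \<in> ksubsets Um b"
      proof (cases "i = 1")
        case True thus ?thesis using h S by (simp add: As'_def Bs'_def ksubsets_def)
      next
        case False
        hence "i - 1 \<in> {1..w+1}" using i by auto
        thus ?thesis using IH(1) False by (simp add: As'_def Bs'_def)
      qed
    qed
    have c2: "\<forall>i\<in>{1..Suc w+1}. As' i \<inter> Bs' i = {}"
    proof
      fix i assume i: "i \<in> {1..Suc w + 1}"
      show "As' i \<inter> Bs' i = {}"
      proof (cases "i = 1")
        case True thus ?thesis using S by (simp add: As'_def Bs'_def)
      next
        case False
        hence "i - 1 \<in> {1..w+1}" using i by auto
        thus ?thesis using IH(2) False by (simp add: As'_def Bs'_def)
      qed
    qed
    have c3: "\<forall>i\<in>{1..Suc w}. As' (i + 1) \<inter> Bs' i = {}"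
    proof
      fix i assume i: "i \<in> {1..Suc w}"
      show "As' (i + 1) \<inter> Bs' i = {}"
      proof (cases "i = 1")
        case True thus ?thesis using S IH(4) by (simp add: As'_def Bs'_def)
      next
        case False
        hence "i - 1 \<in> {1..w}" using i by auto
        hence "As (i - 1 + 1) \<inter> Bs (i - 1) = {}" using IH(3) by blast
        moreover have "i - 1 + 1 = i" using False i by auto
        ultimately show ?thesis using False i by (simp add: As'_def Bs'_def)
      qed
    qed
    have c4: "As' 1 = A" "Bs' (Suc w + 1) = B" using IH(5) by (auto simp: As'_def Bs'_def)
    show "\<exists>As Bs :: nat \<Rightarrow> nat set.
    (\<forall>i\<in>{1..Suc w+1}. As i \<in> ksubsets UA a \<and> Bs i \<in> ksubsets Um b) \<and>
    (\<forall>i\<in>{1..Suc w+1}. As i \<inter> Bs i = {}) \<and>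
    (\<forall>i\<in>{1..Suc w}. As (i + 1) \<inter> Bs i = {}) \<and>
    As 1 = A \<and> Bs (Suc w + 1) = B"
      apply (rule exI[of _ As'], rule exI[of _ Bs'])
      using c1 c2 c3 c4 by (intro conjI)
  qed
qed

theorem lemma4p3:
  fixes m n k l t r w :: nat and T :: "nat set" and j :: nat and A B :: "nat set"
  assumes "m > 0" "n > 0" "k > 0" "l > 0" "t > 0" "r > 0"
    and "k \<ge> l" "l \<ge> t + r"
    and "min m n \<ge> k + l - t + 2"
    and "T \<in> ksubsets {1..min m n} (t + 2 * r)"
    and "j \<in> {1..min m n} - T"
    and "A \<in> ksubsets ({1..n} - (T \<union> {j})) (k - r - t)"
    and "B \<in> ksubsets ({1..m} - (T \<union> {j})) (l - r - t)"
    and "card (A \<inter> B) = w"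
  shows "\<exists>As Bs :: nat \<Rightarrow> nat set.
    (\<forall>i\<in>{1..w+1}. As i \<in> ksubsets ({1..n} - (T \<union> {j})) (k - r - t)
                  \<and> Bs i \<in> ksubsets ({1..m} - (T \<union> {j})) (l - r - t)) \<and>
    (\<forall>i\<in>{1..w+1}. As i \<inter> Bs i = {}) \<and>
    (\<forall>i\<in>{1..w}. As (i + 1) \<inter> Bs i = {}) \<and>
    As 1 = A \<and> Bs (w + 1) = B"
proof -
  define C where "C = {1..min m n} - (T \<union> {j})"
  have TS: "T \<union> {j} \<subseteq> {1..min m n}" and cT: "card T = t + 2 * r"
    using assms(10,11) by (auto simp: ksubsets_def)
  have fT: "finite T" using TS finite_subset by blast
  have cTj: "card (T \<union> {j}) = t + 2 * r + 1" using assms(11) cT fT by simp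
  have cC: "card C = min m n - (t + 2 * r + 1)"
    unfolding C_def using card_Diff_subset[OF _ TS] fT cTj by simp
  hence cC': "card C \<ge> (k - r - t) + (l - r - t) + 1" using assms(7,8,9) by linarith
  have CUA: "C \<subseteq> {1..n} - (T \<union> {j})" and CUm: "C \<subseteq> {1..m} - (T \<union> {j})"
    unfolding C_def by auto
  have BU: "B \<subseteq> {1..m} - (T \<union> {j})" "card B = l - r - t" using assms(13) by (auto simp: ksubsets_def)
  have fB: "finite B" using BU(1) finite_subset by blast
  have AU: "A \<subseteq> {1..n} - (T \<union> {j})" "card A = k - r - t" using assms(12) by (auto simp: ksubsets_def)
  show ?thesis
    using chain_lemma[OF _ CUA CUm cC' _ BU(1) BU(2) fB, of w] AU assms(14)
    unfolding C_def by auto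
qed

end
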